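(* Let $W\subseteq\mathbb{R}^d$ be open, bounded, convex, inner regular with $0\in W$, and $h>1$. Define $v_0=h\,\mathbf 1_{hW}$ on $\mathbb{Z}^d$ and $v_{k+1}=v_k+(2d)^{-1}\max\{0,\Delta v_k-\mathbf 1_{\{v_k=0\}}\}$. Then $v_k$ converges pointwise as $k\to\infty$ to $u_h$, the least function $u:\mathbb{Z}^d\to\mathbb{R}$ satisfying $u\ge h\mathbf 1_{hW}$ and $\Delta u\le\mathbf 1_{\{u=0\}}$.
   Context: Discrete Laplacian: $\Delta u(x)=\sum_{i=1}^d(u(x+e_i)+u(x-e_i)-2u(x))$. $W$ inner regular means for some $r>0$ every $x\in\partial W$ lies on $\partial B_r(y)$ with $B_r(y)\subseteq W$. *)

theory Defs
  imports "HOL-Analysis.Analysis"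
begin

text \<open>The lattice Z^d is modelled as int ^ 'd, with R^d = real ^ 'd and d = CARD('d).\<close>

definition unit_vec :: "'d::finite \<Rightarrow> int ^ 'd" where
  "unit_vec i = (\<chi> j. if j = i then 1 else 0)"

definition dlaplacian :: "(int ^ 'd::finite \<Rightarrow> real) \<Rightarrow> int ^ 'd \<Rightarrow> real" where
  "dlaplacian u x = (\<Sum>i\<in>UNIV. u (x + unit_vec i) + u (x - unit_vec i) - 2 * u x)"

definition lattice_emb :: "int ^ 'd::finite \<Rightarrow> real ^ 'd" where
  "lattice_emb x = (\<chi> i. real_of_int (x $ i))"

definition inner_regular :: "(real ^ 'd::finite) set \<Rightarrow> bool" where
  "inner_regular W \<longleftrightarrow> (\<exists>r>0. \<forall>x\<in>frontier W. \<exists>y. x \<in> sphere y r \<and> ball y r \<subseteq> W)"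

definition indic :: "bool \<Rightarrow> real" where
  "indic b = (if b then 1 else 0)"

definition init_fun :: "(real ^ 'd::finite) set \<Rightarrow> real \<Rightarrow> int ^ 'd \<Rightarrow> real" where
  "init_fun W h x = h * indic (lattice_emb x \<in> (\<lambda>w. h *\<^sub>R w) ` W)"

definition step_fun :: "(int ^ 'd::finite \<Rightarrow> real) \<Rightarrow> int ^ 'd \<Rightarrow> real" where
  "step_fun v x = v x + (1 / (2 * real CARD('d))) * max 0 (dlaplacian v x - indic (v x = 0))"

primrec iter_seq :: "(real ^ 'd::finite) set \<Rightarrow> real \<Rightarrow> nat \<Rightarrow> int ^ 'd \<Rightarrow> real" where
  "iter_seq W h 0 = init_fun W h"
| "iter_seq W h (Suc k) = step_fun (iter_seq W h k)"

definition admissible :: "(real ^ 'd::finite) set \<Rightarrow> real \<Rightarrow> (int ^ 'd \<Rightarrow> real) \<Rightarrow> bool" where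
  "admissible W h u \<longleftrightarrow> (\<forall>x. u x \<ge> init_fun W h x) \<and> (\<forall>x. dlaplacian u x \<le> indic (u x = 0))"

end

theory Submission
  imports Defs
begin

lemma dlap_const: "dlaplacian (\<lambda>_. c) x = 0"
  by (simp add: dlaplacian_def)

lemma init_nonneg: "h > 0 \<Longrightarrow> 0 \<le> init_fun W h x"
  by (simp add: init_fun_def indic_def)

lemma dlap_cmp:
  fixes v w :: "int ^ 'd::finite \<Rightarrow> real"
  assumes "\<forall>y. v y \<le> w y"
  shows "dlaplacian v x \<le> dlaplacian w x + 2 * real CARD('d) * (w x - v x)"
proof -
  have "dlaplacian v x \<le> (\<Sum>i\<in>UNIV. (w (x + unit_vec i) + w (x - unit_vec i) - 2 * w x) + 2*(w x - v x))"
    unfolding dlaplacian_def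
    by (rule sum_mono) (use assms in \<open>smt (verit)\<close>)
  also have "\<dots> = dlaplacian w x + 2 * real CARD('d) * (w x - v x)"
    by (simp add: sum.distrib dlaplacian_def algebra_simps sum_subtractf)
  finally show ?thesis .
qed

lemma step_le:
  fixes v w :: "int ^ 'd::finite \<Rightarrow> real"
  assumes v0: "\<forall>y. 0 \<le> v y" and vw: "\<forall>y. v y \<le> w y" and adm: "admissible W h w" and hp: "h > 0"
  shows "step_fun v x \<le> w x"
proof -
  define n where "n = real CARD('d)"
  have n: "n \<ge> 1" unfolding n_def by simp
  define I where "I = indic (v x = 0)"
  have w0: "0 \<le> w x" using adm init_nonneg[OF hp, of W x] unfolding admissible_def by (meson order_trans)
  have dw: "dlaplacian w x \<le> indic (w x = 0)" using adm unfolding admissible_def by blast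
  have dv: "dlaplacian v x \<le> dlaplacian w x + 2 * n * (w x - v x)"
    unfolding n_def using dlap_cmp[OF vw] .
  show ?thesis
  proof (cases "dlaplacian v x - I \<le> 0")
    case True
    then have "step_fun v x = v x" unfolding step_fun_def I_def by simp
    then show ?thesis using vw by simp
  next
    case False
    then have st: "step_fun v x = v x + (1/(2*n)) * (dlaplacian v x - I)"
      unfolding step_fun_def I_def n_def by simp
    have key: "dlaplacian w x - I \<le> 0"
    proof (cases "w x = 0")
      case True
      then have "v x = 0" using vw v0 by (metis antisym)
      then show ?thesis using dw True by (simp add: I_def indic_def)
    next
      case False
      then show ?thesis using dw by (simp add: I_def indic_def)
    qed
    have "(1/(2*n)) * (dlaplacian v x - I) \<le> (1/(2*n)) * (dlaplacian w x - I + 2 * n * (w x - v x))"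
      using dv n by (intro mult_left_mono) auto
    also have "\<dots> = (1/(2*n)) * (dlaplacian w x - I) + (w x - v x)"
      using n by (simp add: field_simps)
    also have "\<dots> \<le> w x - v x"
      using key n by (simp add: divide_nonpos_pos)
    finally show ?thesis using st by simp
  qed
qed

lemma iter_nonneg: "h > 0 \<Longrightarrow> 0 \<le> iter_seq W h k x"
proof (induction k arbitrary: x)
  case 0 then show ?case by (simp add: init_nonneg)
next
  case (Suc k)
  then show ?case using Suc.IH[of x] by (simp add: step_fun_def)
qed

lemma iter_mono: "iter_seq W h k x \<le> iter_seq W h (Suc k) x"
  by (simp add: step_fun_def)

lemma iter_le: "h > 0 \<Longrightarrow> admissible W h w \<Longrightarrow> iter_seq W h k x \<le> w x"
proof (induction k arbitrary: x)
  case 0 then show ?case by (simp add: admissible_def)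
next
  case (Suc k)
  then show ?case using step_le[of "iter_seq W h k" w W h x] iter_nonneg[of h W k] by simp
qed

lemma const_adm: "h > 0 \<Longrightarrow> admissible W h (\<lambda>_. h)"
  by (simp add: admissible_def dlap_const init_fun_def indic_def)

lemma dlap_tendsto:
  fixes v :: "nat \<Rightarrow> int ^ 'd::finite \<Rightarrow> real"
  assumes "\<And>y. (\<lambda>k. v k y) \<longlonglongrightarrow> L y"
  shows "(\<lambda>k. dlaplacian (v k) x) \<longlonglongrightarrow> dlaplacian L x"
  unfolding dlaplacian_def
  by (intro tendsto_sum tendsto_diff tendsto_add tendsto_mult tendsto_const assms)

theorem mainTheorem15:
  fixes W :: "(real ^ 'd::finite) set" and h :: real
  assumes "open W" and "bounded W" and "convex W" and "inner_regular W" and "0 \<in> W"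
    and "h > 1"
  shows "\<exists>u. admissible W h u \<and> (\<forall>w. admissible W h w \<longrightarrow> (\<forall>x. u x \<le> w x))
            \<and> (\<forall>x. (\<lambda>k. iter_seq W h k x) \<longlonglongrightarrow> u x)"
proof -
  have hp: "h > 0" using assms by simp
  define v where "v = iter_seq W h"
  define L where "L x = (SUP k. v k x)" for x
  have inc: "incseq (\<lambda>k. v k x)" for x
    unfolding v_def by (intro incseq_SucI) (rule iter_mono)
  have bdd: "bdd_above (range (\<lambda>k. v k x))" for x
    using iter_le[OF hp const_adm[OF hp]] unfolding v_def by (intro bdd_aboveI) auto
  have lim: "(\<lambda>k. v k x) \<longlonglongrightarrow> L x" for x
    unfolding L_def by (rule LIMSEQ_incseq_SUP[OF bdd inc])
  have vL: "v k x \<le> L x" for k x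
    unfolding L_def by (rule cSUP_upper[OF _ bdd]) simp
  have v0: "0 \<le> v k x" for k x unfolding v_def using iter_nonneg[OF hp] .
  have dl: "(\<lambda>k. dlaplacian (v k) x) \<longlonglongrightarrow> dlaplacian L x" for x
    by (rule dlap_tendsto[OF lim])
  define c where "c = 1 / (2 * real CARD('d))"
  have c: "c > 0" unfolding c_def by simp
  have diff: "(\<lambda>k. max 0 (dlaplacian (v k) x - indic (v k x = 0))) \<longlonglongrightarrow> 0" for x
  proof -
    have "(\<lambda>k. v (Suc k) x - v k x) \<longlonglongrightarrow> L x - L x"
      by (intro tendsto_diff lim LIMSEQ_Suc)
    then have "(\<lambda>k. (1/c) * (v (Suc k) x - v k x)) \<longlonglongrightarrow> (1/c) * 0"
      by (intro tendsto_mult tendsto_const) simp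
    moreover have "(1/c) * (v (Suc k) x - v k x) = max 0 (dlaplacian (v k) x - indic (v k x = 0))" for k
      using c unfolding v_def by (simp add: step_fun_def c_def)
    ultimately show ?thesis by simp
  qed
  have adm: "admissible W h L"
    unfolding admissible_def
  proof (intro conjI allI)
    fix x
    show "init_fun W h x \<le> L x" using vL[of 0 x] unfolding v_def by simp
  next
    fix x
    show "dlaplacian L x \<le> indic (L x = 0)"
    proof (cases "L x = 0")
      case True
      then have "v k x = 0" for k using vL[of k x] v0[of k x] by simp
      then have "(\<lambda>k. max 0 (dlaplacian (v k) x - 1)) \<longlonglongrightarrow> 0"
        using diff[of x] by (simp add: indic_def)
      moreover have "(\<lambda>k. max 0 (dlaplacian (v k) x - 1)) \<longlonglongrightarrow> max 0 (dlaplacian L x - 1)"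
        by (intro tendsto_max tendsto_const tendsto_diff dl)
      ultimately have "max 0 (dlaplacian L x - 1) = 0" using LIMSEQ_unique by blast
      then show ?thesis using True by (simp add: indic_def)
    next
      case False
      then have pos: "L x > 0" using vL[of 0 x] v0[of 0 x] by simp
      have ev: "eventually (\<lambda>k. v k x > 0) sequentially"
        using order_tendstoD(1)[OF lim pos] .
      have "(\<lambda>k. max 0 (dlaplacian (v k) x)) \<longlonglongrightarrow> 0"
      proof (rule Lim_transform_eventually[OF diff[of x]])
        show "\<forall>\<^sub>F k in sequentially. max 0 (dlaplacian (v k) x - indic (v k x = 0)) = max 0 (dlaplacian (v k) x)"
          using ev by eventually_elim (simp add: indic_def)
      qed
      moreover have "(\<lambda>k. max 0 (dlaplacian (v k) x)) \<longlonglongrightarrow> max 0 (dlaplacian L x)"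
        by (intro tendsto_max tendsto_const dl)
      ultimately have "max 0 (dlaplacian L x) = 0" using LIMSEQ_unique by blast
      then show ?thesis using False by (simp add: indic_def)
    qed
  qed
  have least: "\<forall>w. admissible W h w \<longrightarrow> (\<forall>x. L x \<le> w x)"
  proof (intro allI impI)
    fix w x assume "admissible W h w"
    then have "\<forall>k. v k x \<le> w x" unfolding v_def using iter_le[OF hp] by blast
    then show "L x \<le> w x" unfolding L_def by (intro cSUP_least) auto
  qed
  show ?thesis using adm least lim unfolding v_def by blast
qed

end
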